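(* Let $S_{\text{thirds}}=(1,\mathbb{R}^{+},\{-\tfrac13,0,\tfrac13\},f_{\text{add}},\{\bot\}\cup\mathbb{Z}^{+},h_{\text{sqz}},x_0=0)$ and $\widehat{S}_{\text{binary}}=(1,\mathbb{R}^{+},\{\pm\tfrac{1}{2^p}\mid p\in\mathbb{Z}\},f_{\text{add}},\{\bot\}\cup\mathbb{Z}^{+},h_{\text{sqz}},\widehat{x}_0=0)$, where $f_{\text{add}}(x,u)=x+u$ and $$h_{\text{sqz}}(x)=\begin{cases} q & \text{if there is } q\in\mathbb{Z}^{+} \text{ with } -\frac{1}{4\cdot 2^q}\le x-\frac{q}{3}\le\frac{1}{4\cdot 2^q},\\ \bot & \text{otherwise.}\end{cases}$$ For any $1$-illusion of $S_{\text{thirds}}$ by $\widehat{S}_{\text{binary}}$, with witness time-scaling function $z$, and any finite $T$, when the robot in $S_{\text{thirds}}$ follows the constant policy $u_k=\tfrac13$, there exists $N_T>0$ such that $$T<\max_{k\in\{1,\dots,N_T\}}\{z(k+1)-z(k)\}.$$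
   Context: A deterministic multi-robot transition system is a 7-tuple $(n,X,U,f,Y,h,x_0)$: $n$ robots, product state space $X$, product action space $U$, transition function $f:X\times U\to X$ (componentwise per robot), product observation space $Y$, observation function $h:X\to Y$ (componentwise per robot, $h^{(i)}$), initial state $x_0$; it evolves by $x_{k+1}=f(x_k,u_k)$, $y_k=h(x_k)$. Here both systems have a single robot. When a primary system $\widehat{S}$ (hatted quantities) emulates a secondary system $S$, a robot policy $\widehat{\pi}^{(i)}$ for robot $i$ of $\widehat{S}$ maps its own action history $\widehat{u}^{(i)}_0,\dots,\widehat{u}^{(i)}_k$, its observation history $\widehat{y}^{(i)}_0,\dots,\widehat{y}^{(i)}_k$, and the state history $x_0,\dots,x_\ell$ of the secondary system (with $\ell$ possibly different from $k$) to an action $\widehat{u}^{(i)}_k$. Robot policies in $S$ choose actions from histories in the same manner. $\widehat{S}$ is an $m$-illusion of $S$ (with $0<m\le n$) if there exist (i) robot policies $\widehat{\pi}^{(1)},\dots,\widehat{\pi}^{(\widehat{n})}$ in $\widehat{S}$, (ii) a strictly increasing function $z:\mathbb{Z}^+\to\mathbb{Z}^+$, and (iii) functions $\rho_k:\{1,\dots,m\}\to\{1,\dots,\widehat{n}\}$, such that for any robot policies $\pi^{(1)},\dots,\pi^{(n)}$ in $S$, for all $k\ge0$ and $1\le i\le m$, $h^{(i)}(x_k)=\widehat{h}^{(\rho_k(i))}(\widehat{x}_{z(k)})$, where $x$ and $\widehat{x}$ are the state trajectories of $S$ and $\widehat{S}$. A tuple $(\widehat{\pi},(\rho_k),z)$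 satisfying this is a witness to the illusion. *)

theory Defs
  imports Complex_Main
begin

text \<open>Observations: None stands for bottom, Some q for q in Z+ (= nonnegative integers).\<close>
type_synonym obs = "nat option"

definition sqz_ok :: "real \<Rightarrow> nat \<Rightarrow> bool" where
  "sqz_ok x q \<longleftrightarrow> - (1 / (4 * 2 ^ q)) \<le> x - real q / 3 \<and> x - real q / 3 \<le> 1 / (4 * 2 ^ q)"

text \<open>h_sqz; where the defining intervals overlap, the least such q is returned.\<close>
definition h_sqz :: "real \<Rightarrow> obs" where
  "h_sqz x = (if \<exists>q. sqz_ok x q then Some (LEAST q. sqz_ok x q) else None)"

definition f_add :: "real \<Rightarrow> real \<Rightarrow> real" where
  "f_add x u = x + u"

definition U_thirds :: "real set" where
  "U_thirds = {- 1/3, 0, 1/3}"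

definition U_binary :: "real set" where
  "U_binary = {u. \<exists>p::int. u = 1 / 2 powr (real_of_int p) \<or> u = - (1 / 2 powr (real_of_int p))}"

text \<open>A policy of the (single) robot of S_thirds: own action history u_0..u_{k-1} and
  observation history y_0..y_k give u_k.\<close>
type_synonym policy = "real list \<Rightarrow> obs list \<Rightarrow> real"

definition valid_policy :: "policy \<Rightarrow> bool" where
  "valid_policy \<pi> \<longleftrightarrow> (\<forall>us ys. \<pi> us ys \<in> U_thirds)"

definition run_thirds :: "policy \<Rightarrow> (nat \<Rightarrow> real) \<Rightarrow> (nat \<Rightarrow> real) \<Rightarrow> bool" where
  "run_thirds \<pi> x u \<longleftrightarrow> x 0 = 0 \<and>
     (\<forall>k. u k = \<pi> (map u [0..<k]) (map (h_sqz \<circ> x) [0..<Suc k]) \<and> x (Suc k) = f_add (x k) (u k))"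

text \<open>A policy of the (single) robot of the primary system: own action history, own observation
  history, and the state history x_0..x_l of the secondary system.\<close>
type_synonym hpolicy = "real list \<Rightarrow> obs list \<Rightarrow> real list \<Rightarrow> real"

definition valid_hpolicy :: "hpolicy \<Rightarrow> bool" where
  "valid_hpolicy \<pi> \<longleftrightarrow> (\<forall>us ys xs. \<pi> us ys xs \<in> U_binary)"

text \<open>The index l (how much of the secondary state history is visible at primary step j) is
  given by an arbitrary function ell.\<close>
definition run_binary ::
  "(nat \<Rightarrow> nat) \<Rightarrow> hpolicy \<Rightarrow> (nat \<Rightarrow> real) \<Rightarrow> (nat \<Rightarrow> real) \<Rightarrow> (nat \<Rightarrow> real) \<Rightarrow> bool" where
  "run_binary ell \<pi>h x xh uh \<longleftrightarrow> xh 0 = 0 \<and>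
     (\<forall>j. uh j = \<pi>h (map uh [0..<j]) (map (h_sqz \<circ> xh) [0..<Suc j]) (map x [0..<Suc (ell j)])
          \<and> xh (Suc j) = f_add (xh j) (uh j))"

text \<open>Witness of a 1-illusion of S_thirds by S_binary (with one robot each, rho_k is forced to be
  the identity on {1}).\<close>
definition illusion_witness :: "(nat \<Rightarrow> nat) \<Rightarrow> hpolicy \<Rightarrow> (nat \<Rightarrow> nat) \<Rightarrow> bool" where
  "illusion_witness ell \<pi>h z \<longleftrightarrow> valid_hpolicy \<pi>h \<and> strict_mono z \<and>
     (\<forall>\<pi> x u xh uh. valid_policy \<pi> \<longrightarrow> run_thirds \<pi> x u \<longrightarrow> run_binary ell \<pi>h x xh uh \<longrightarrow>
        (\<forall>k. h_sqz (x k) = h_sqz (xh (z k))))"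

end

theory Submission
  imports Defs
begin

fun xhf :: "hpolicy \<Rightarrow> (nat \<Rightarrow> nat) \<Rightarrow> (nat \<Rightarrow> real) \<Rightarrow> nat \<Rightarrow> real" where
  "xhf p ell x 0 = 0"
| "xhf p ell x (Suc j) = xhf p ell x j +
     p (map (\<lambda>i. xhf p ell x (Suc i) - xhf p ell x i) [0..<j])
       (map (\<lambda>i. h_sqz (xhf p ell x i)) [0..<Suc j]) (map x [0..<Suc (ell j)])"

lemma approx_bound:
  "\<exists>\<delta>>0. \<forall>A (u::nat\<Rightarrow>real). finite A \<and> card A \<le> n \<and> (\<forall>i\<in>A. u i \<in> U_binary)
      \<longrightarrow> \<delta> \<le> \<bar>sum u A - 1/3\<bar>"
proof (induction n)
  case 0
  show ?case
    by (rule exI[of _ "1/3"]) auto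
next
  case (Suc n)
  then obtain d where d: "d > 0" and dH0: "\<forall>(A::nat set) (u::nat\<Rightarrow>real). finite A \<and> card A \<le> n \<and> (\<forall>i\<in>A. u i \<in> U_binary)
      \<longrightarrow> d \<le> \<bar>sum u A - 1/3\<bar>" by (elim exE conjE) (rule that)
  have dH: "d \<le> \<bar>sum u A - 1/3\<bar>" if "finite A" "card A \<le> n" "\<forall>i\<in>A. u i \<in> U_binary" for A :: "nat set" and u :: "nat \<Rightarrow> real"
    using dH0 that by blast
  obtain N :: nat where N: "2 / d < 2 ^ N" using real_arch_pow[of 2 "2/d"] by auto
  have Npos: "(0::real) < 2 ^ N" by simp
  define e where "e = min (d/2) (1 / (3 * 2 ^ N))"
  have "e > 0" using d by (simp add: e_def)
  moreover have "e \<le> \<bar>sum u A - 1/3\<bar>"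
    if A: "finite A" "card A \<le> Suc n" "\<forall>i\<in>A. u i \<in> U_binary" for A :: "nat set" and u :: "nat \<Rightarrow> real"
  proof (cases "\<exists>i\<in>A. \<bar>u i\<bar> \<le> d/2")
    case True
    then obtain i where i: "i \<in> A" "\<bar>u i\<bar> \<le> d/2" by blast
    have s: "sum u A = u i + sum u (A - {i})" using A(1) i(1) by (simp add: sum.remove)
    have "d \<le> \<bar>sum u (A - {i}) - 1/3\<bar>"
      using dH[of "A - {i}" u] A i by auto
    then show ?thesis using s i unfolding e_def by linarith
  next
    case False
    have int: "u i * 2 ^ N \<in> \<int>" if "i \<in> A" for i
    proof -
      from A(3) that obtain p :: int where
        p: "u i = 1 / 2 powr p \<or> u i = - (1 / 2 powr p)" unfolding U_binary_def by blast
      have ab: "\<bar>u i\<bar> = 2 powr (- p)" using p by (auto simp: powr_minus_divide)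
      have "d/2 < 2 powr (-p)" using False that ab by auto
      moreover have "2 powr (- real N) < d / 2"
      proof -
        have "2 powr (- real N) = 1 / 2 ^ N" by (simp add: powr_minus_divide powr_realpow)
        also have "\<dots> < d/2" using N d by (simp add: field_simps)
        finally show ?thesis .
      qed
      ultimately have "2 powr (- real N) < 2 powr (- p)" by linarith
      hence lt: "- real N < - p" by simp
      hence pos: "- p + int N > 0" by linarith
      define m where "m = nat (- p + int N)"
      have mm: "real_of_int (- p) + real N = real m" using pos unfolding m_def by simp
      have e1: "2 powr (- p) * 2 ^ N = (2::real) ^ m"
      proof -
        have "2 powr (real_of_int (- p) + real N) = 2 powr (real_of_int (- p)) * 2 powr (real N)"
          by (rule powr_add)
        moreover have "(2::real) powr (real N) = 2 ^ N" by (simp add: powr_realpow)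
        ultimately have "2 powr (- p) * 2 ^ N = 2 powr (real_of_int (- p) + real N)"
          by simp
        also have "\<dots> = 2 ^ m" using mm by (simp add: powr_realpow)
        finally show ?thesis .
      qed
      have "u i = 2 powr (- p) \<or> u i = - (2 powr (- p))" using p by (auto simp: powr_minus_divide)
      hence "u i * 2 ^ N = 2 ^ m \<or> u i * 2 ^ N = - (2 ^ m)" using e1 by auto
      thus ?thesis by (metis Ints_minus Ints_power Ints_numeral)
    qed
    have "sum u A * 2 ^ N \<in> \<int>"
      using int by (simp add: sum_distrib_right Ints_sum)
    then obtain m :: int where m: "sum u A * 2 ^ N = of_int m" by (auto elim: Ints_cases)
    have md: "(2::int) ^ N mod 3 = 1 \<or> (2::int) ^ N mod 3 = 2"
    proof (induction N)
      case 0 then show ?case by simp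
    next
      case (Suc N)
      have "(2::int) ^ Suc N mod 3 = (2 * ((2::int) ^ N mod 3)) mod 3" by (simp add: mod_mult_right_eq)
      then show ?case using Suc.IH by auto
    qed
    have ne: "3 * m \<noteq> 2 ^ N"
    proof
      assume "3 * m = 2 ^ N"
      hence "(2::int) ^ N mod 3 = 0" by (metis mod_mult_self1_is_0)
      thus False using md by simp
    qed
    have "1 \<le> \<bar>3 * m - 2 ^ N\<bar>" using ne by linarith
    hence "real_of_int 1 \<le> real_of_int \<bar>3 * m - 2 ^ N\<bar>" by (simp only: of_int_le_iff)
    hence ge: "\<bar>3 * real_of_int m - 2 ^ N\<bar> \<ge> 1" by simp
    have "sum u A - 1/3 = (3 * real_of_int m - 2 ^ N) / (3 * 2 ^ N)"
      using m Npos by (simp add: field_simps)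
    hence "\<bar>sum u A - 1/3\<bar> = \<bar>3 * real_of_int m - 2 ^ N\<bar> / (3 * 2 ^ N)" by simp
    moreover have "1 / (3 * 2 ^ N) \<le> \<bar>3 * real_of_int m - 2 ^ N\<bar> / (3 * 2 ^ N)"
      using ge Npos by (simp add: divide_right_mono)
    ultimately show ?thesis unfolding e_def by linarith
  qed
  ultimately show ?case by blast
qed

lemma run_binary_xhf:
  "run_binary ell p x (xhf p ell x) (\<lambda>j. xhf p ell x (Suc j) - xhf p ell x j)"
proof -
  have e: "xhf p ell x (Suc j) - xhf p ell x j =
     p (map (\<lambda>i. xhf p ell x (Suc i) - xhf p ell x i) [0..<j])
       (map (\<lambda>i. h_sqz (xhf p ell x i)) [0..<Suc j]) (map x [0..<Suc (ell j)])" for j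
    using xhf.simps(2)[of p ell x j] by linarith
  show ?thesis unfolding run_binary_def f_add_def comp_def
  proof (intro conjI allI)
    show "xhf p ell x 0 = 0" by (rule xhf.simps(1))
  next
    fix j
    show "xhf p ell x (Suc j) - xhf p ell x j =
     p (map (\<lambda>i. xhf p ell x (Suc i) - xhf p ell x i) [0..<j])
       (map (\<lambda>i. h_sqz (xhf p ell x i)) [0..<Suc j]) (map x [0..<Suc (ell j)])" by (rule e)
  next
    fix j
    show "xhf p ell x (Suc j) = xhf p ell x j + (xhf p ell x (Suc j) - xhf p ell x j)" by linarith
  qed
qed

lemma h_sqz_third: "h_sqz (real k / 3) = Some k"
proof -
  have ok: "sqz_ok (real k / 3) k" unfolding sqz_ok_def by simp
  have nok: "\<not> sqz_ok (real k / 3) q" if "q \<noteq> k" for q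
  proof
    assume a: "sqz_ok (real k / 3) q"
    have "1 / (4 * 2 ^ q) \<le> (1/4::real)" by (simp add: field_simps)
    moreover have "\<bar>real k - real q\<bar> \<ge> 1" using that by linarith
    moreover have "\<bar>real k / 3 - real q / 3\<bar> \<le> 1 / (4 * 2 ^ q)"
      using a unfolding sqz_ok_def by linarith
    moreover have "\<bar>real k / 3 - real q / 3\<bar> = \<bar>real k - real q\<bar> / 3" by (simp add: abs_if field_simps)
    ultimately show False by linarith
  qed
  have "(LEAST q. sqz_ok (real k / 3) q) = k"
    by (rule Least_equality) (use ok nok in \<open>force+\<close>)
  thus ?thesis using ok unfolding h_sqz_def by auto
qed

lemma h_sqz_Some: "h_sqz y = Some k \<Longrightarrow> sqz_ok y k"
  unfolding h_sqz_def by (auto split: if_splits intro: LeastI_ex)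

theorem lemma2:
  fixes ell :: "nat \<Rightarrow> nat" and \<pi>h :: hpolicy and z :: "nat \<Rightarrow> nat" and T :: real
  assumes "illusion_witness ell \<pi>h z"
  shows "\<exists>N::nat. N > 0 \<and> T < Max ((\<lambda>k. real (z (Suc k)) - real (z k)) ` {1..N})"
proof -
  define x :: "nat \<Rightarrow> real" where "x = (\<lambda>k. real k / 3)"
  define u :: "nat \<Rightarrow> real" where "u = (\<lambda>k. 1/3)"
  define \<pi> :: policy where "\<pi> = (\<lambda>_ _. 1/3)"
  define xh where "xh = xhf \<pi>h ell x"
  define uh where "uh = (\<lambda>j. xh (Suc j) - xh j)"
  have vp: "valid_policy \<pi>" unfolding valid_policy_def \<pi>_def U_thirds_def by simp
  have rt: "run_thirds \<pi> x u" unfolding run_thirds_def \<pi>_def x_def u_def f_add_def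
    by (simp add: field_simps)
  have rb: "run_binary ell \<pi>h x xh uh" unfolding xh_def uh_def by (rule run_binary_xhf)
  have sm: "strict_mono z" and vh: "valid_hpolicy \<pi>h"
    using assms unfolding illusion_witness_def by auto
  have W: "\<And>\<pi> x u xh uh. valid_policy \<pi> \<Longrightarrow> run_thirds \<pi> x u \<Longrightarrow> run_binary ell \<pi>h x xh uh \<Longrightarrow>
        (\<forall>k. h_sqz (x k) = h_sqz (xh (z k)))"
    using assms unfolding illusion_witness_def by blast
  have obs: "h_sqz (x k) = h_sqz (xh (z k))" for k
    using W[OF vp rt rb] by blast
  have close: "\<bar>xh (z k) - real k / 3\<bar> \<le> 1 / (4 * 2 ^ k)" for k
  proof -
    have "h_sqz (xh (z k)) = Some k" using obs[of k] h_sqz_third[of k] by (simp add: x_def)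
    from h_sqz_Some[OF this] show ?thesis unfolding sqz_ok_def by linarith
  qed
  have uhB: "uh j \<in> U_binary" for j
  proof -
    have "uh j = \<pi>h (map uh [0..<j]) (map (h_sqz \<circ> xh) [0..<Suc j]) (map x [0..<Suc (ell j)])"
      using rb unfolding run_binary_def by blast
    thus ?thesis using vh unfolding valid_hpolicy_def by simp
  qed
  have tele: "xh b - xh a = sum uh {a..<b}" if "a \<le> b" for a b
    using that
  proof (induction b)
    case 0 then show ?case by simp
  next
    case (Suc b)
    show ?case
    proof (cases "a = Suc b")
      case True then show ?thesis by simp
    next
      case False
      hence "a \<le> b" using Suc.prems by simp
      thus ?thesis using Suc.IH by (simp add: uh_def)
    qed
  qed
  have unb: "\<exists>k\<ge>1. real (z (Suc k)) - real (z k) > T"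
  proof (rule ccontr)
    assume "\<not> ?thesis"
    hence bnd: "real (z (Suc k)) - real (z k) \<le> T" if "k \<ge> 1" for k using that by force
    obtain d where d: "d > 0" and dH: "\<forall>(A::nat set) (v::nat\<Rightarrow>real). finite A \<and> card A \<le> nat \<lceil>T\<rceil> \<and> (\<forall>i\<in>A. v i \<in> U_binary)
      \<longrightarrow> d \<le> \<bar>sum v A - 1/3\<bar>" using approx_bound[of "nat \<lceil>T\<rceil>"] by (elim exE conjE) (rule that)
    obtain k :: nat where k: "1 / d < 2 ^ k" using real_arch_pow[of 2 "1/d"] by auto
    define k' where "k' = Suc k"
    have k'1: "k' \<ge> 1" by (simp add: k'_def)
    have "z k' \<le> z (Suc k')" using sm by (simp add: strict_mono_less_eq)
    hence sumeq: "xh (z (Suc k')) - xh (z k') = sum uh {z k'..<z (Suc k')}" by (rule tele)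
    have "card {z k'..<z (Suc k')} = z (Suc k') - z k'" by simp
    moreover have "real (z (Suc k')) - real (z k') \<le> T" using bnd k'1 by blast
    ultimately have "card {z k'..<z (Suc k')} \<le> nat \<lceil>T\<rceil>" by linarith
    hence "d \<le> \<bar>sum uh {z k'..<z (Suc k')} - 1/3\<bar>" using dH[rule_format, of "{z k'..<z (Suc k')}" uh] uhB by blast
    moreover have "\<bar>xh (z (Suc k')) - xh (z k') - 1/3\<bar> \<le> 1 / (4 * 2 ^ Suc k') + 1 / (4 * 2 ^ k')"
      using close[of k'] close[of "Suc k'"] by (simp add: field_simps abs_le_iff)
    moreover have "1 / (4 * 2 ^ Suc k') + 1 / (4 * 2 ^ k') < (1 / 2 ^ k :: real)"
      by (simp add: k'_def field_simps)
    moreover have "1 / 2 ^ k < d" using k d by (simp add: field_simps)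
    ultimately show False using sumeq by linarith
  qed
  then obtain k where k: "k \<ge> 1" "real (z (Suc k)) - real (z k) > T" by blast
  have m: "real (z (Suc k)) - real (z k) \<le> Max ((\<lambda>k. real (z (Suc k)) - real (z k)) ` {1..k})"
    by (rule Max_ge) (use k in auto)
  have "T < Max ((\<lambda>k. real (z (Suc k)) - real (z k)) ` {1..k})" using m k by linarith
  thus ?thesis using k by (intro exI[of _ k]) simp
qed

end
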